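(* Let $(\mathcal{C},\mathbb{E},\mathfrak{s})$ be an extriangulated category and $\mathcal{I}$ an ideal of $\mathcal{C}$. Consider the statements: (a) there is an additive subfunctor $\mathbb{F}\subseteq\mathbb{E}$ having enough injective morphisms with $\mathcal{I}=\mathrm{Ph}(\mathbb{F})$; (a') there is an additive subfunctor $\mathbb{F}\subseteq\mathbb{E}$ having enough special injective morphisms with $\mathcal{I}=\mathrm{Ph}(\mathbb{F})$; (b) $\mathcal{I}$ is a special precovering ideal; (c) $(\mathcal{I},\mathcal{I}^{\perp_{\mathbb{E}}})$ is a complete $\mathbb{E}$-cotorsion pair; (d) the additive subfunctor $\mathcal{I}^\star\subseteq\mathbb{E}$ has enough special injective morphisms and $\mathcal{I}=\mathrm{Ph}(\mathcal{I}^\star)$. Then: (I) if $\mathcal{C}$ has enough projective morphisms, (a) (and hence (a')) implies (b); (II) if $\mathcal{C}$ has enough injective objects, (b) implies (c); (III) (c) implies (d); (IV) (d) implies (a').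
   Context: An extriangulated category $(\mathcal{C},\mathbb{E},\mathfrak{s})$ (Nakaoka–Palu): additive $\mathcal{C}$, biadditive $\mathbb{E}:\mathcal{C}^{\mathrm{op}}\times\mathcal{C}\to\mathrm{Ab}$, additive realization $\mathfrak{s}$ assigning to each $\delta\in\mathbb{E}(C,A)$ an equivalence class of sequences $A\to B\to C$, forming $\mathbb{E}$-triangles $A\to B\to C\overset{\delta}{\dashrightarrow}$, satisfying (ET1)–(ET4), (ET3)$^{\mathrm{op}}$, (ET4)$^{\mathrm{op}}$. Notation $a_\star\delta=\mathbb{E}(C,a)(\delta)$, $c^\star\delta=\mathbb{E}(c,A)(\delta)$; a morphism of $\mathbb{E}$-triangles is a commuting triple $(a,b,c)$ with $a_\star\delta=c^\star\delta'$. An ideal: class of morphisms with zeros, closed under sums and two-sided composition. Additive subfunctor $\mathbb{F}$: subgroups $\mathbb{F}(C,A)\subseteq\mathbb{E}(C,A)$ stable under $a_\star,c^\star$; $\mathbb{F}$-triangles have extension in $\mathbb{F}$. $\mathrm{Ph}(\mathbb{F})$: morphisms $\varphi:X\to C$ with $\varphi^\star\delta\in\mathbb{F}(X,A)$ for all $\delta\in\mathbb{E}(C,A)$. $\mathbb{F}\text{-}\mathrm{inj}$: morphisms $i:A\to Y$ with $i_\star\delta=0$ for all $\delta\in\mathbb{F}(C,A)$. $\mathcal{I}^\star(X,A)=\{i^\star\delta\mid i\in\mathcal{I}(X,C),\ \delta\in\mathbb{E}(C,A)\}$. $\mathbb{F}$ has enough injective morphisms: every $A$ admits an $\mathbb{F}$-triangle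 $A\xrightarrow{e}B\to C\overset{\delta}{\dashrightarrow}$ with $e\in\mathbb{F}\text{-}\mathrm{inj}$; enough special injective morphisms: moreover there is an $\mathbb{E}$-triangle $A\to B'\to C'\overset{\delta'}{\dashrightarrow}$ and a morphism of $\mathbb{E}$-triangles $(\mathrm{id}_A,b,\varphi)$ from the former to it with $\varphi\in\mathrm{Ph}(\mathbb{F})$. $\mathcal{C}$ has enough projective morphisms: every $C$ admits an $\mathbb{E}$-triangle $K\to P\xrightarrow{p}C\overset{\gamma}{\dashrightarrow}$ with $p^\star\delta=0$ for all $\delta\in\mathbb{E}(C,A)$; enough injective objects: every $A$ admits an $\mathbb{E}$-triangle $A\to E\to C\overset{\delta}{\dashrightarrow}$ with $\mathbb{E}(-,E)=0$. $\mathcal{M}^{\perp_{\mathbb{E}}}=\{g:A\to Y\mid m^\star g_\star\delta=0\ \forall m\in\mathcal{M},\,m:X\to C,\ \forall\delta\in\mathbb{E}(C,A)\}$; ${}^{\perp_{\mathbb{E}}}\mathcal{M}=\{g:X\to C\mid g^\star m_\star\delta=0\ \forall m\in\mathcal{M},\,m:A\to Y,\ \forall\delta\in\mathbb{E}(C,A)\}$. $\mathbb{E}$-cotorsion pair: ideals with $\mathcal{I}={}^{\perp_{\mathbb{E}}}\mathcal{J}$, $\mathcal{J}=\mathcal{I}^{\perp_{\mathbb{E}}}$; complete if $\mathcal{I}$ is special precovering and $\mathcal{J}$ special preenveloping. Special $\mathcal{I}$-precover of $C$: $i:X\to C$ in $\mathcal{I}$ with $\mathbb{E}$-triangles $A\to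 B\to C\overset{\delta}{\dashrightarrow}$, $A'\to X\xrightarrow{i}C\overset{\delta'}{\dashrightarrow}$ and a morphism $(j,b,\mathrm{id}_C)$ between them, $j\in\mathcal{I}^{\perp_{\mathbb{E}}}$. Special $\mathcal{J}$-preenvelope of $A$: $e:A\to X$ in $\mathcal{J}$ with $\mathbb{E}$-triangles $A\xrightarrow{e}X\to Y\overset{\delta}{\dashrightarrow}$, $A\to B\to C\overset{\delta'}{\dashrightarrow}$ and a morphism $(\mathrm{id}_A,b,j)$, $j\in{}^{\perp_{\mathbb{E}}}\mathcal{J}$. Special precovering/preenveloping ideal: every object has one. *)

theory Defs
  imports Main
begin

section \<open>Extriangulated categories (Nakaoka--Palu), encoded as a record\<close>

text \<open>
  Objects have type 'o, morphisms type 'm, extensions type 'e.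
  cmp g f is the composite g after f.  Ex C A is the abelian group E(C,A)
  with operations eadd C A and neutral element ezero C A.
  pull A c delta is c^* delta = E(c,A)(delta); push C a delta is a_* delta = E(C,a)(delta).
  rlz C A delta x y means: the sequence A --x--> B --y--> C belongs to the
  equivalence class s(delta) (for delta in E(C,A)).
\<close>

record ('o,'m,'e) extri =
  ob :: "'o set"
  mor :: "'m set"
  dm :: "'m \<Rightarrow> 'o"
  cd :: "'m \<Rightarrow> 'o"
  cmp :: "'m \<Rightarrow> 'm \<Rightarrow> 'm"
  idm :: "'o \<Rightarrow> 'm"
  madd :: "'m \<Rightarrow> 'm \<Rightarrow> 'm"
  mzero :: "'o \<Rightarrow> 'o \<Rightarrow> 'm"
  Ex :: "'o \<Rightarrow> 'o \<Rightarrow> 'e set"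
  eadd :: "'o \<Rightarrow> 'o \<Rightarrow> 'e \<Rightarrow> 'e \<Rightarrow> 'e"
  ezero :: "'o \<Rightarrow> 'o \<Rightarrow> 'e"
  pull :: "'o \<Rightarrow> 'm \<Rightarrow> 'e \<Rightarrow> 'e"
  push :: "'o \<Rightarrow> 'm \<Rightarrow> 'e \<Rightarrow> 'e"
  rlz :: "'o \<Rightarrow> 'o \<Rightarrow> 'e \<Rightarrow> 'm \<Rightarrow> 'm \<Rightarrow> bool"

definition hom :: "('o,'m,'e) extri \<Rightarrow> 'o \<Rightarrow> 'o \<Rightarrow> 'm set" where
  "hom X A B = {f \<in> mor X. dm X f = A \<and> cd X f = B}"

definition is_category :: "('o,'m,'e) extri \<Rightarrow> bool" where
  "is_category X \<longleftrightarrow>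
     (\<forall>f\<in>mor X. dm X f \<in> ob X \<and> cd X f \<in> ob X)
   \<and> (\<forall>A\<in>ob X. idm X A \<in> hom X A A)
   \<and> (\<forall>A B C f g. f \<in> hom X A B \<longrightarrow> g \<in> hom X B C \<longrightarrow> cmp X g f \<in> hom X A C)
   \<and> (\<forall>A B f. f \<in> hom X A B \<longrightarrow> cmp X (idm X B) f = f \<and> cmp X f (idm X A) = f)
   \<and> (\<forall>A B C D f g h. f \<in> hom X A B \<longrightarrow> g \<in> hom X B C \<longrightarrow> h \<in> hom X C D \<longrightarrow>
        cmp X h (cmp X g f) = cmp X (cmp X h g) f)"

definition is_biproduct ::
  "('o,'m,'e) extri \<Rightarrow> 'o \<Rightarrow> 'o \<Rightarrow> 'o \<Rightarrow> 'm \<Rightarrow> 'm \<Rightarrow> 'm \<Rightarrow> 'm \<Rightarrow> bool" where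
  "is_biproduct X A B S i1 i2 p1 p2 \<longleftrightarrow>
     S \<in> ob X \<and> i1 \<in> hom X A S \<and> i2 \<in> hom X B S \<and> p1 \<in> hom X S A \<and> p2 \<in> hom X S B
   \<and> cmp X p1 i1 = idm X A \<and> cmp X p2 i2 = idm X B
   \<and> cmp X p1 i2 = mzero X B A \<and> cmp X p2 i1 = mzero X A B
   \<and> madd X (cmp X i1 p1) (cmp X i2 p2) = idm X S"

definition is_additive :: "('o,'m,'e) extri \<Rightarrow> bool" where
  "is_additive X \<longleftrightarrow> is_category X
   \<and> (\<forall>A\<in>ob X. \<forall>B\<in>ob X.
        mzero X A B \<in> hom X A B
      \<and> (\<forall>f\<in>hom X A B. \<forall>g\<in>hom X A B. madd X f g \<in> hom X A B)
      \<and> (\<forall>f\<in>hom X A B. \<forall>g\<in>hom X A B. \<forall>h\<in>hom X A B.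
            madd X (madd X f g) h = madd X f (madd X g h))
      \<and> (\<forall>f\<in>hom X A B. \<forall>g\<in>hom X A B. madd X f g = madd X g f)
      \<and> (\<forall>f\<in>hom X A B. madd X f (mzero X A B) = f)
      \<and> (\<forall>f\<in>hom X A B. \<exists>g\<in>hom X A B. madd X f g = mzero X A B))
   \<and> (\<forall>A B C f g h. f \<in> hom X A B \<longrightarrow> g \<in> hom X A B \<longrightarrow> h \<in> hom X B C \<longrightarrow>
        cmp X h (madd X f g) = madd X (cmp X h f) (cmp X h g))
   \<and> (\<forall>A B C f g h. f \<in> hom X B C \<longrightarrow> g \<in> hom X B C \<longrightarrow> h \<in> hom X A B \<longrightarrow>
        cmp X (madd X f g) h = madd X (cmp X f h) (cmp X g h))
   \<and> (\<exists>Z\<in>ob X. \<forall>A\<in>ob X. hom X Z A = {mzero X Z A} \<and> hom X A Z = {mzero X A Z})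
   \<and> (\<forall>A\<in>ob X. \<forall>B\<in>ob X. \<exists>S i1 i2 p1 p2. is_biproduct X A B S i1 i2 p1 p2)"

definition is_biadditive_E :: "('o,'m,'e) extri \<Rightarrow> bool" where
  "is_biadditive_E X \<longleftrightarrow>
     (\<forall>C\<in>ob X. \<forall>A\<in>ob X.
        ezero X C A \<in> Ex X C A
      \<and> (\<forall>d\<in>Ex X C A. \<forall>e\<in>Ex X C A. eadd X C A d e \<in> Ex X C A)
      \<and> (\<forall>d\<in>Ex X C A. \<forall>e\<in>Ex X C A. \<forall>f\<in>Ex X C A.
            eadd X C A (eadd X C A d e) f = eadd X C A d (eadd X C A e f))
      \<and> (\<forall>d\<in>Ex X C A. \<forall>e\<in>Ex X C A. eadd X C A d e = eadd X C A e d)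
      \<and> (\<forall>d\<in>Ex X C A. eadd X C A d (ezero X C A) = d)
      \<and> (\<forall>d\<in>Ex X C A. \<exists>e\<in>Ex X C A. eadd X C A d e = ezero X C A))
   \<and> (\<forall>A\<in>ob X. \<forall>C C' c. c \<in> hom X C' C \<longrightarrow>
        (\<forall>d\<in>Ex X C A. pull X A c d \<in> Ex X C' A)
      \<and> (\<forall>d\<in>Ex X C A. \<forall>e\<in>Ex X C A.
            pull X A c (eadd X C A d e) = eadd X C' A (pull X A c d) (pull X A c e))
      \<and> (\<forall>c2\<in>hom X C' C. \<forall>d\<in>Ex X C A.
            pull X A (madd X c c2) d = eadd X C' A (pull X A c d) (pull X A c2 d))
      \<and> (\<forall>C'' c'. c' \<in> hom X C'' C' \<longrightarrow> (\<forall>d\<in>Ex X C A.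
            pull X A (cmp X c c') d = pull X A c' (pull X A c d))))
   \<and> (\<forall>A\<in>ob X. \<forall>C\<in>ob X. \<forall>d\<in>Ex X C A. pull X A (idm X C) d = d)
   \<and> (\<forall>C\<in>ob X. \<forall>A A' a. a \<in> hom X A A' \<longrightarrow>
        (\<forall>d\<in>Ex X C A. push X C a d \<in> Ex X C A')
      \<and> (\<forall>d\<in>Ex X C A. \<forall>e\<in>Ex X C A.
            push X C a (eadd X C A d e) = eadd X C A' (push X C a d) (push X C a e))
      \<and> (\<forall>a2\<in>hom X A A'. \<forall>d\<in>Ex X C A.
            push X C (madd X a a2) d = eadd X C A' (push X C a d) (push X C a2 d))
      \<and> (\<forall>A'' a'. a' \<in> hom X A' A'' \<longrightarrow> (\<forall>d\<in>Ex X C A.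
            push X C (cmp X a' a) d = push X C a' (push X C a d))))
   \<and> (\<forall>A\<in>ob X. \<forall>C\<in>ob X. \<forall>d\<in>Ex X C A. push X C (idm X A) d = d)
   \<and> (\<forall>A A' C C' a c d. a \<in> hom X A A' \<longrightarrow> c \<in> hom X C' C \<longrightarrow> d \<in> Ex X C A \<longrightarrow>
        push X C' a (pull X A c d) = pull X A' c (push X C a d))"

definition is_iso :: "('o,'m,'e) extri \<Rightarrow> 'o \<Rightarrow> 'o \<Rightarrow> 'm \<Rightarrow> bool" where
  "is_iso X B B' b \<longleftrightarrow> b \<in> hom X B B' \<and>
     (\<exists>b'\<in>hom X B' B. cmp X b' b = idm X B \<and> cmp X b b' = idm X B')"

definition seq_equiv ::
  "('o,'m,'e) extri \<Rightarrow> 'o \<Rightarrow> 'o \<Rightarrow> 'm \<Rightarrow> 'm \<Rightarrow> 'm \<Rightarrow> 'm \<Rightarrow> bool" where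
  "seq_equiv X A C x y x' y' \<longleftrightarrow>
     x \<in> hom X A (cd X x) \<and> y \<in> hom X (cd X x) C \<and>
     x' \<in> hom X A (cd X x') \<and> y' \<in> hom X (cd X x') C \<and>
     (\<exists>b. is_iso X (cd X x) (cd X x') b \<and> cmp X b x = x' \<and> cmp X y' b = y)"

definition tri_morph ::
  "('o,'m,'e) extri \<Rightarrow> 'o \<Rightarrow> 'o \<Rightarrow> 'e \<Rightarrow> 'm \<Rightarrow> 'm
     \<Rightarrow> 'o \<Rightarrow> 'o \<Rightarrow> 'e \<Rightarrow> 'm \<Rightarrow> 'm \<Rightarrow> 'm \<Rightarrow> 'm \<Rightarrow> 'm \<Rightarrow> bool" where
  "tri_morph X A C d x y A' C' d' x' y' a b c \<longleftrightarrow>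
     a \<in> hom X A A' \<and> b \<in> hom X (cd X x) (cd X x') \<and> c \<in> hom X C C'
   \<and> cmp X b x = cmp X x' a \<and> cmp X c y = cmp X y' b
   \<and> push X C a d = pull X A' c d'"

text \<open>(ET2): s is an additive realization of E.  The predicate rlz C A delta
  describes exactly one equivalence class of sequences for each delta in E(C,A).\<close>
definition is_additive_realization :: "('o,'m,'e) extri \<Rightarrow> bool" where
  "is_additive_realization X \<longleftrightarrow>
     (\<forall>C A d x y. rlz X C A d x y \<longrightarrow>
        C \<in> ob X \<and> A \<in> ob X \<and> d \<in> Ex X C A \<and> cd X x \<in> ob X \<and>
        x \<in> hom X A (cd X x) \<and> y \<in> hom X (cd X x) C)
   \<and> (\<forall>C\<in>ob X. \<forall>A\<in>ob X. \<forall>d\<in>Ex X C A. \<exists>x y. rlz X C A d x y)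
   \<and> (\<forall>C A d x y x' y'. rlz X C A d x y \<longrightarrow>
        (rlz X C A d x' y' \<longleftrightarrow> seq_equiv X A C x y x' y'))
   \<and> (\<forall>C A d x y C' A' d' x' y' a c.
        rlz X C A d x y \<longrightarrow> rlz X C' A' d' x' y' \<longrightarrow>
        a \<in> hom X A A' \<longrightarrow> c \<in> hom X C C' \<longrightarrow> push X C a d = pull X A' c d' \<longrightarrow>
        (\<exists>b. tri_morph X A C d x y A' C' d' x' y' a b c))
   \<and> (\<forall>A\<in>ob X. \<forall>C\<in>ob X. \<forall>S i1 i2 p1 p2.
        is_biproduct X A C S i1 i2 p1 p2 \<longrightarrow> rlz X C A (ezero X C A) i1 p2)
   \<and> (\<forall>C A d x y C' A' d' x' y'
        SA ia ia' pa pa' SC ic ic' pc pc' SB ib ib' pb pb' t.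
        rlz X C A d x y \<longrightarrow> rlz X C' A' d' x' y' \<longrightarrow>
        is_biproduct X A A' SA ia ia' pa pa' \<longrightarrow>
        is_biproduct X C C' SC ic ic' pc pc' \<longrightarrow>
        is_biproduct X (cd X x) (cd X x') SB ib ib' pb pb' \<longrightarrow>
        t \<in> Ex X SC SA \<longrightarrow>
        push X C pa (pull X SA ic t) = d \<longrightarrow>
        push X C' pa' (pull X SA ic' t) = d' \<longrightarrow>
        push X C' pa (pull X SA ic' t) = ezero X C' A \<longrightarrow>
        push X C pa' (pull X SA ic t) = ezero X C A' \<longrightarrow>
        rlz X SC SA t
          (madd X (cmp X ib (cmp X x pa)) (cmp X ib' (cmp X x' pa')))
          (madd X (cmp X ic (cmp X y pb)) (cmp X ic' (cmp X y' pb'))))"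

definition ET3 :: "('o,'m,'e) extri \<Rightarrow> bool" where
  "ET3 X \<longleftrightarrow> (\<forall>C A d x y C' A' d' x' y' a b.
     rlz X C A d x y \<longrightarrow> rlz X C' A' d' x' y' \<longrightarrow>
     a \<in> hom X A A' \<longrightarrow> b \<in> hom X (cd X x) (cd X x') \<longrightarrow> cmp X b x = cmp X x' a \<longrightarrow>
     (\<exists>c. tri_morph X A C d x y A' C' d' x' y' a b c))"

definition ET3op :: "('o,'m,'e) extri \<Rightarrow> bool" where
  "ET3op X \<longleftrightarrow> (\<forall>C A d x y C' A' d' x' y' b c.
     rlz X C A d x y \<longrightarrow> rlz X C' A' d' x' y' \<longrightarrow>
     b \<in> hom X (cd X x) (cd X x') \<longrightarrow> c \<in> hom X C C' \<longrightarrow> cmp X c y = cmp X y' b \<longrightarrow>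
     (\<exists>a. tri_morph X A C d x y A' C' d' x' y' a b c))"

definition ET4 :: "('o,'m,'e) extri \<Rightarrow> bool" where
  "ET4 X \<longleftrightarrow> (\<forall>A B C D F f f' g g' d d'.
     rlz X D A d f f' \<longrightarrow> rlz X F B d' g g' \<longrightarrow> cd X f = B \<longrightarrow> cd X g = C \<longrightarrow>
     (\<exists>E dd e h' e''.
        dd \<in> hom X D E \<and> e \<in> hom X E F \<and> h' \<in> hom X C E \<and>
        cmp X h' g = cmp X dd f' \<and> cmp X e h' = g' \<and>
        rlz X E A e'' (cmp X g f) h' \<and>
        rlz X F D (push X F f' d') dd e \<and>
        pull X A dd e'' = d \<and>
        push X E f e'' = pull X B e d'))"

definition ET4op :: "('o,'m,'e) extri \<Rightarrow> bool" where
  "ET4op X \<longleftrightarrow> (\<forall>A B C D F f f' g g' d d'.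
     rlz X B D d f' f \<longrightarrow> rlz X C F d' g' g \<longrightarrow> cd X f' = A \<longrightarrow> cd X g' = B \<longrightarrow>
     (\<exists>E dd e h' e''.
        dd \<in> hom X D E \<and> e \<in> hom X E F \<and> h' \<in> hom X E A \<and>
        cmp X h' dd = f' \<and> cmp X f h' = cmp X g' e \<and>
        rlz X C E e'' h' (cmp X g f) \<and>
        rlz X F D (pull X D g' d) dd e \<and>
        push X C e e'' = d' \<and>
        push X B dd d = pull X E g e''))"

definition extriangulated :: "('o,'m,'e) extri \<Rightarrow> bool" where
  "extriangulated X \<longleftrightarrow> is_additive X \<and> is_biadditive_E X \<and>
     is_additive_realization X \<and> ET3 X \<and> ET3op X \<and> ET4 X \<and> ET4op X"

definition is_ideal :: "('o,'m,'e) extri \<Rightarrow> 'm set \<Rightarrow> bool" where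
  "is_ideal X I \<longleftrightarrow> I \<subseteq> mor X
   \<and> (\<forall>A\<in>ob X. \<forall>B\<in>ob X. mzero X A B \<in> I)
   \<and> (\<forall>A B f g. f \<in> I \<inter> hom X A B \<longrightarrow> g \<in> I \<inter> hom X A B \<longrightarrow> madd X f g \<in> I)
   \<and> (\<forall>A B C D f g h. f \<in> hom X A B \<longrightarrow> g \<in> I \<inter> hom X B C \<longrightarrow> h \<in> hom X C D \<longrightarrow>
        cmp X h (cmp X g f) \<in> I)"

definition is_additive_subfunctor ::
  "('o,'m,'e) extri \<Rightarrow> ('o \<Rightarrow> 'o \<Rightarrow> 'e set) \<Rightarrow> bool" where
  "is_additive_subfunctor X F \<longleftrightarrow>
     (\<forall>C\<in>ob X. \<forall>A\<in>ob X.
        F C A \<subseteq> Ex X C A \<and> ezero X C A \<in> F C A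
      \<and> (\<forall>d\<in>F C A. \<forall>e\<in>F C A. eadd X C A d e \<in> F C A)
      \<and> (\<forall>d\<in>F C A. \<forall>e\<in>Ex X C A. eadd X C A d e = ezero X C A \<longrightarrow> e \<in> F C A))
   \<and> (\<forall>C A A' a d. a \<in> hom X A A' \<longrightarrow> C \<in> ob X \<longrightarrow> d \<in> F C A \<longrightarrow> push X C a d \<in> F C A')
   \<and> (\<forall>C C' A c d. c \<in> hom X C' C \<longrightarrow> A \<in> ob X \<longrightarrow> d \<in> F C A \<longrightarrow> pull X A c d \<in> F C' A)"

definition Ph :: "('o,'m,'e) extri \<Rightarrow> ('o \<Rightarrow> 'o \<Rightarrow> 'e set) \<Rightarrow> 'm set" where
  "Ph X F = {phi \<in> mor X. \<forall>A\<in>ob X. \<forall>d\<in>Ex X (cd X phi) A.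
               pull X A phi d \<in> F (dm X phi) A}"

definition F_inj :: "('o,'m,'e) extri \<Rightarrow> ('o \<Rightarrow> 'o \<Rightarrow> 'e set) \<Rightarrow> 'm set" where
  "F_inj X F = {i \<in> mor X. \<forall>C\<in>ob X. \<forall>d\<in>F C (dm X i).
                  push X C i d = ezero X C (cd X i)}"

definition Istar :: "('o,'m,'e) extri \<Rightarrow> 'm set \<Rightarrow> 'o \<Rightarrow> 'o \<Rightarrow> 'e set" where
  "Istar X I X0 A = {pull X A i d | i d C. C \<in> ob X \<and> i \<in> I \<inter> hom X X0 C \<and> d \<in> Ex X C A}"

definition enough_inj_morphisms ::
  "('o,'m,'e) extri \<Rightarrow> ('o \<Rightarrow> 'o \<Rightarrow> 'e set) \<Rightarrow> bool" where
  "enough_inj_morphisms X F \<longleftrightarrow> (\<forall>A\<in>ob X. \<exists>C d e y.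
      rlz X C A d e y \<and> d \<in> F C A \<and> e \<in> F_inj X F)"

definition enough_special_inj_morphisms ::
  "('o,'m,'e) extri \<Rightarrow> ('o \<Rightarrow> 'o \<Rightarrow> 'e set) \<Rightarrow> bool" where
  "enough_special_inj_morphisms X F \<longleftrightarrow> (\<forall>A\<in>ob X. \<exists>C d e y.
      rlz X C A d e y \<and> d \<in> F C A \<and> e \<in> F_inj X F \<and>
      (\<exists>C' d' x' y' b phi. rlz X C' A d' x' y' \<and>
         tri_morph X A C d e y A C' d' x' y' (idm X A) b phi \<and> phi \<in> Ph X F))"

definition enough_proj_morphisms :: "('o,'m,'e) extri \<Rightarrow> bool" where
  "enough_proj_morphisms X \<longleftrightarrow> (\<forall>C\<in>ob X. \<exists>K g k p.
      rlz X C K g k p \<and> (\<forall>A\<in>ob X. \<forall>d\<in>Ex X C A. pull X A p d = ezero X (dm X p) A))"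

definition enough_inj_objects :: "('o,'m,'e) extri \<Rightarrow> bool" where
  "enough_inj_objects X \<longleftrightarrow> (\<forall>A\<in>ob X. \<exists>C d x y.
      rlz X C A d x y \<and> (\<forall>Y\<in>ob X. Ex X Y (cd X x) = {ezero X Y (cd X x)}))"

definition rperp :: "('o,'m,'e) extri \<Rightarrow> 'm set \<Rightarrow> 'm set" where
  "rperp X M = {g \<in> mor X. \<forall>m\<in>M. \<forall>d\<in>Ex X (cd X m) (dm X g).
      pull X (cd X g) m (push X (cd X m) g d) = ezero X (dm X m) (cd X g)}"

definition lperp :: "('o,'m,'e) extri \<Rightarrow> 'm set \<Rightarrow> 'm set" where
  "lperp X M = {g \<in> mor X. \<forall>m\<in>M. \<forall>d\<in>Ex X (cd X g) (dm X m).
      pull X (cd X m) g (push X (cd X g) m d) = ezero X (dm X g) (cd X m)}"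

definition is_cotorsion_pair :: "('o,'m,'e) extri \<Rightarrow> 'm set \<Rightarrow> 'm set \<Rightarrow> bool" where
  "is_cotorsion_pair X I J \<longleftrightarrow> is_ideal X I \<and> is_ideal X J \<and>
     I = lperp X J \<and> J = rperp X I"

definition special_precover :: "('o,'m,'e) extri \<Rightarrow> 'm set \<Rightarrow> 'o \<Rightarrow> 'm \<Rightarrow> bool" where
  "special_precover X I C i \<longleftrightarrow> i \<in> I \<and> cd X i = C \<and>
     (\<exists>A d x y A' d' x' b j.
        rlz X C A d x y \<and> rlz X C A' d' x' i \<and>
        tri_morph X A C d x y A' C d' x' i j b (idm X C) \<and> j \<in> rperp X I)"

definition special_precovering :: "('o,'m,'e) extri \<Rightarrow> 'm set \<Rightarrow> bool" where
  "special_precovering X I \<longleftrightarrow> (\<forall>C\<in>ob X. \<exists>i. special_precover X I C i)"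

definition special_preenvelope :: "('o,'m,'e) extri \<Rightarrow> 'm set \<Rightarrow> 'o \<Rightarrow> 'm \<Rightarrow> bool" where
  "special_preenvelope X J A e \<longleftrightarrow> e \<in> J \<and> dm X e = A \<and>
     (\<exists>Y d y C d' x' y' b j.
        rlz X Y A d e y \<and> rlz X C A d' x' y' \<and>
        tri_morph X A Y d e y A C d' x' y' (idm X A) b j \<and> j \<in> lperp X J)"

definition special_preenveloping :: "('o,'m,'e) extri \<Rightarrow> 'm set \<Rightarrow> bool" where
  "special_preenveloping X J \<longleftrightarrow> (\<forall>A\<in>ob X. \<exists>e. special_preenvelope X J A e)"

definition complete_cotorsion_pair :: "('o,'m,'e) extri \<Rightarrow> 'm set \<Rightarrow> 'm set \<Rightarrow> bool" where
  "complete_cotorsion_pair X I J \<longleftrightarrow> is_cotorsion_pair X I J \<and>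
     special_precovering X I \<and> special_preenveloping X J"

end

theory Submission
  imports Defs
begin


locale extri_cat =
  fixes X :: "('o,'m,'e) extri"
  assumes ext: "extriangulated X"
begin

lemma cat: "is_category X" and add: "is_additive X" and biE: "is_biadditive_E X"
  and ar: "is_additive_realization X" and et3: "ET3 X" and et3op: "ET3op X"
proof -
  show "is_additive X" "is_biadditive_E X" "is_additive_realization X" "ET3 X" "ET3op X"
    using ext unfolding extriangulated_def by simp_all
  then show "is_category X" unfolding is_additive_def by simp
qed


lemmas C1 = cat[unfolded is_category_def, THEN conjunct1]
lemmas C2 = cat[unfolded is_category_def, THEN conjunct2, THEN conjunct1]
lemmas C3 = cat[unfolded is_category_def, THEN conjunct2, THEN conjunct2, THEN conjunct1]
lemmas C4 = cat[unfolded is_category_def, THEN conjunct2, THEN conjunct2, THEN conjunct2, THEN conjunct1]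
lemmas C5 = cat[unfolded is_category_def, THEN conjunct2, THEN conjunct2, THEN conjunct2, THEN conjunct2]
lemmas A2 = add[unfolded is_additive_def, THEN conjunct2, THEN conjunct1]
lemmas A3 = add[unfolded is_additive_def, THEN conjunct2, THEN conjunct2, THEN conjunct1]
lemmas A4 = add[unfolded is_additive_def, THEN conjunct2, THEN conjunct2, THEN conjunct2, THEN conjunct1]
lemmas A6 = add[unfolded is_additive_def, THEN conjunct2, THEN conjunct2, THEN conjunct2, THEN conjunct2, THEN conjunct2]
lemmas E1 = biE[unfolded is_biadditive_E_def, THEN conjunct1]
lemmas E2 = biE[unfolded is_biadditive_E_def, THEN conjunct2, THEN conjunct1]
lemmas E3 = biE[unfolded is_biadditive_E_def, THEN conjunct2, THEN conjunct2, THEN conjunct1]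
lemmas E4 = biE[unfolded is_biadditive_E_def, THEN conjunct2, THEN conjunct2, THEN conjunct2, THEN conjunct1]
lemmas E5 = biE[unfolded is_biadditive_E_def, THEN conjunct2, THEN conjunct2, THEN conjunct2, THEN conjunct2, THEN conjunct1]
lemmas E6 = biE[unfolded is_biadditive_E_def, THEN conjunct2, THEN conjunct2, THEN conjunct2, THEN conjunct2, THEN conjunct2]

lemma hom_D: "f \<in> hom X A B \<Longrightarrow> f \<in> mor X \<and> dm X f = A \<and> cd X f = B"
  by (simp add: hom_def)

lemma hom_ob: assumes "f \<in> hom X A B" shows "A \<in> ob X" "B \<in> ob X"
  using C1 assms unfolding hom_def by auto

lemma mor_hom: "f \<in> mor X \<Longrightarrow> f \<in> hom X (dm X f) (cd X f)"
  by (simp add: hom_def)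

lemma mor_ob: "f \<in> mor X \<Longrightarrow> dm X f \<in> ob X \<and> cd X f \<in> ob X"
  using C1 by auto

lemma id_hom: "A \<in> ob X \<Longrightarrow> idm X A \<in> hom X A A"
  using C2 by blast

lemma cmp_hom: "f \<in> hom X A B \<Longrightarrow> g \<in> hom X B C \<Longrightarrow> cmp X g f \<in> hom X A C"
  using C3 by blast

lemma id_l: "f \<in> hom X A B \<Longrightarrow> cmp X (idm X B) f = f"
  using C4 by blast

lemma id_r: "f \<in> hom X A B \<Longrightarrow> cmp X f (idm X A) = f"
  using C4 by blast

lemma assoc: "f \<in> hom X A B \<Longrightarrow> g \<in> hom X B C \<Longrightarrow> h \<in> hom X C D \<Longrightarrow>
        cmp X h (cmp X g f) = cmp X (cmp X h g) f"
  using C5 by blast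

lemma mzero_hom: "A \<in> ob X \<Longrightarrow> B \<in> ob X \<Longrightarrow> mzero X A B \<in> hom X A B"
  using A2 hom_ob by blast

lemma madd_hom: "f \<in> hom X A B \<Longrightarrow> g \<in> hom X A B \<Longrightarrow> madd X f g \<in> hom X A B"
  using A2 hom_ob by blast

lemma madd_zero: "f \<in> hom X A B \<Longrightarrow> madd X f (mzero X A B) = f"
  using A2 hom_ob by blast

lemma madd_assoc: "f \<in> hom X A B \<Longrightarrow> g \<in> hom X A B \<Longrightarrow> h \<in> hom X A B \<Longrightarrow>
   madd X (madd X f g) h = madd X f (madd X g h)"
  using A2 hom_ob by blast

lemma madd_inv: "f \<in> hom X A B \<Longrightarrow> \<exists>g\<in>hom X A B. madd X f g = mzero X A B"
  using A2 hom_ob by blast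

lemma distl: "f \<in> hom X A B \<Longrightarrow> g \<in> hom X A B \<Longrightarrow> h \<in> hom X B C \<Longrightarrow>
        cmp X h (madd X f g) = madd X (cmp X h f) (cmp X h g)"
  using A3 by blast

lemma distr: "f \<in> hom X B C \<Longrightarrow> g \<in> hom X B C \<Longrightarrow> h \<in> hom X A B \<Longrightarrow>
        cmp X (madd X f g) h = madd X (cmp X f h) (cmp X g h)"
  using A4 by blast

lemma biprod_ex: "A \<in> ob X \<Longrightarrow> B \<in> ob X \<Longrightarrow> \<exists>S i1 i2 p1 p2. is_biproduct X A B S i1 i2 p1 p2"
  using A6 by blast

lemma madd_idem: assumes "h \<in> hom X A B" "madd X h h = h" shows "h = mzero X A B"
proof -
  obtain g where g: "g \<in> hom X A B" "madd X h g = mzero X A B" using madd_inv assms by blast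
  have "h = madd X h (mzero X A B)" using madd_zero assms by simp
  also have "\<dots> = madd X h (madd X h g)" using g by simp
  also have "\<dots> = madd X (madd X h h) g" using madd_assoc[OF assms(1) assms(1) g(1)] by simp
  also have "\<dots> = mzero X A B" using assms g by simp
  finally show ?thesis .
qed

lemma zz: "A \<in> ob X \<Longrightarrow> B \<in> ob X \<Longrightarrow> madd X (mzero X A B) (mzero X A B) = mzero X A B"
  using madd_zero mzero_hom by blast

lemma cmp_zero_r: assumes "g \<in> hom X B C" "A \<in> ob X" shows "cmp X g (mzero X A B) = mzero X A C"
proof -
  have B: "B \<in> ob X" "C \<in> ob X" using hom_ob assms by auto
  have h: "cmp X g (mzero X A B) \<in> hom X A C" using cmp_hom mzero_hom assms B by blast
  have "cmp X g (mzero X A B) = cmp X g (madd X (mzero X A B) (mzero X A B))" using zz assms B by simp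
  also have "\<dots> = madd X (cmp X g (mzero X A B)) (cmp X g (mzero X A B))"
    using distl mzero_hom assms B by blast
  finally show ?thesis using madd_idem h by metis
qed

lemma cmp_zero_l: assumes "f \<in> hom X A B" "C \<in> ob X" shows "cmp X (mzero X B C) f = mzero X A C"
proof -
  have B: "A \<in> ob X" "B \<in> ob X" using hom_ob assms by auto
  have h: "cmp X (mzero X B C) f \<in> hom X A C" using cmp_hom mzero_hom assms B by blast
  have "cmp X (mzero X B C) f = cmp X (madd X (mzero X B C) (mzero X B C)) f" using zz assms B by simp
  also have "\<dots> = madd X (cmp X (mzero X B C) f) (cmp X (mzero X B C) f)"
    using distr mzero_hom assms B by blast
  finally show ?thesis using madd_idem h by metis
qed

lemma ez_Ex: "C \<in> ob X \<Longrightarrow> A \<in> ob X \<Longrightarrow> ezero X C A \<in> Ex X C A"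
  using E1 by blast
lemma eadd_Ex: "C \<in> ob X \<Longrightarrow> A \<in> ob X \<Longrightarrow> d \<in> Ex X C A \<Longrightarrow> e \<in> Ex X C A \<Longrightarrow> eadd X C A d e \<in> Ex X C A"
  using E1 by blast
lemma eadd_assoc: "C \<in> ob X \<Longrightarrow> A \<in> ob X \<Longrightarrow> d \<in> Ex X C A \<Longrightarrow> e \<in> Ex X C A \<Longrightarrow> f \<in> Ex X C A \<Longrightarrow>
   eadd X C A (eadd X C A d e) f = eadd X C A d (eadd X C A e f)"
  using E1 by blast
lemma eadd_comm: "C \<in> ob X \<Longrightarrow> A \<in> ob X \<Longrightarrow> d \<in> Ex X C A \<Longrightarrow> e \<in> Ex X C A \<Longrightarrow> eadd X C A d e = eadd X C A e d"
  using E1 by blast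
lemma eadd_zero: "C \<in> ob X \<Longrightarrow> A \<in> ob X \<Longrightarrow> d \<in> Ex X C A \<Longrightarrow> eadd X C A d (ezero X C A) = d"
  using E1 by blast
lemma eadd_inv: "C \<in> ob X \<Longrightarrow> A \<in> ob X \<Longrightarrow> d \<in> Ex X C A \<Longrightarrow> \<exists>e\<in>Ex X C A. eadd X C A d e = ezero X C A"
  using E1 by blast

lemma eadd_idem: assumes "C \<in> ob X" "A \<in> ob X" "h \<in> Ex X C A" "eadd X C A h h = h" shows "h = ezero X C A"
proof -
  obtain g where g: "g \<in> Ex X C A" "eadd X C A h g = ezero X C A" using eadd_inv assms by blast
  have "h = eadd X C A h (ezero X C A)" using eadd_zero assms by simp
  also have "\<dots> = eadd X C A h (eadd X C A h g)" using g by simp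
  also have "\<dots> = eadd X C A (eadd X C A h h) g" using eadd_assoc[OF assms(1,2,3,3) g(1)] by simp
  also have "\<dots> = ezero X C A" using assms g by simp
  finally show ?thesis .
qed

lemma eadd_inv_uniq: assumes "C \<in> ob X" "A \<in> ob X" "d \<in> Ex X C A" "e \<in> Ex X C A" "e' \<in> Ex X C A"
  "eadd X C A d e = ezero X C A" "eadd X C A d e' = ezero X C A" shows "e = e'"
proof -
  have "e = eadd X C A e (ezero X C A)" using eadd_zero assms by simp
  also have "\<dots> = eadd X C A e (eadd X C A d e')" using assms by simp
  also have "\<dots> = eadd X C A (eadd X C A e d) e'" using eadd_assoc assms by simp
  also have "\<dots> = eadd X C A (ezero X C A) e'" using assms eadd_comm by simp
  also have "\<dots> = e'" using assms eadd_comm eadd_zero ez_Ex by metis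
  finally show ?thesis .
qed

lemma pull_Ex: "A \<in> ob X \<Longrightarrow> c \<in> hom X C' C \<Longrightarrow> d \<in> Ex X C A \<Longrightarrow> pull X A c d \<in> Ex X C' A"
  using E2 by blast
lemma pull_add: "A \<in> ob X \<Longrightarrow> c \<in> hom X C' C \<Longrightarrow> d \<in> Ex X C A \<Longrightarrow> e \<in> Ex X C A \<Longrightarrow>
   pull X A c (eadd X C A d e) = eadd X C' A (pull X A c d) (pull X A c e)"
  using E2 by blast
lemma pull_madd: "A \<in> ob X \<Longrightarrow> c \<in> hom X C' C \<Longrightarrow> c2 \<in> hom X C' C \<Longrightarrow> d \<in> Ex X C A \<Longrightarrow>
   pull X A (madd X c c2) d = eadd X C' A (pull X A c d) (pull X A c2 d)"
  using E2 by blast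
lemma pull_cmp: "A \<in> ob X \<Longrightarrow> c \<in> hom X C' C \<Longrightarrow> c' \<in> hom X C'' C' \<Longrightarrow> d \<in> Ex X C A \<Longrightarrow>
   pull X A (cmp X c c') d = pull X A c' (pull X A c d)"
  using E2 by blast
lemma pull_id: "A \<in> ob X \<Longrightarrow> C \<in> ob X \<Longrightarrow> d \<in> Ex X C A \<Longrightarrow> pull X A (idm X C) d = d"
  using E3 by blast
lemma push_Ex: "C \<in> ob X \<Longrightarrow> a \<in> hom X A A' \<Longrightarrow> d \<in> Ex X C A \<Longrightarrow> push X C a d \<in> Ex X C A'"
  using E4 by blast
lemma push_add: "C \<in> ob X \<Longrightarrow> a \<in> hom X A A' \<Longrightarrow> d \<in> Ex X C A \<Longrightarrow> e \<in> Ex X C A \<Longrightarrow>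
   push X C a (eadd X C A d e) = eadd X C A' (push X C a d) (push X C a e)"
  using E4 by blast
lemma push_madd: "C \<in> ob X \<Longrightarrow> a \<in> hom X A A' \<Longrightarrow> a2 \<in> hom X A A' \<Longrightarrow> d \<in> Ex X C A \<Longrightarrow>
   push X C (madd X a a2) d = eadd X C A' (push X C a d) (push X C a2 d)"
  using E4 by blast
lemma push_cmp: "C \<in> ob X \<Longrightarrow> a \<in> hom X A A' \<Longrightarrow> a' \<in> hom X A' A'' \<Longrightarrow> d \<in> Ex X C A \<Longrightarrow>
   push X C (cmp X a' a) d = push X C a' (push X C a d)"
  using E4 by blast
lemma push_id: "A \<in> ob X \<Longrightarrow> C \<in> ob X \<Longrightarrow> d \<in> Ex X C A \<Longrightarrow> push X C (idm X A) d = d"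
  using E5 by blast
lemma push_pull: "a \<in> hom X A A' \<Longrightarrow> c \<in> hom X C' C \<Longrightarrow> d \<in> Ex X C A \<Longrightarrow>
        push X C' a (pull X A c d) = pull X A' c (push X C a d)"
  using E6 by blast

lemma pull_ez: assumes "A \<in> ob X" "c \<in> hom X C' C" shows "pull X A c (ezero X C A) = ezero X C' A"
proof -
  have o: "C \<in> ob X" "C' \<in> ob X" using hom_ob assms by auto
  have z: "ezero X C A \<in> Ex X C A" using ez_Ex o assms by simp
  have "pull X A c (ezero X C A) = pull X A c (eadd X C A (ezero X C A) (ezero X C A))"
    using eadd_zero z o assms by simp
  also have "\<dots> = eadd X C' A (pull X A c (ezero X C A)) (pull X A c (ezero X C A))"
    using pull_add assms z by blast
  finally show ?thesis using eadd_idem pull_Ex assms z o by metis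
qed

lemma push_ez: assumes "C \<in> ob X" "a \<in> hom X A A'" shows "push X C a (ezero X C A) = ezero X C A'"
proof -
  have o: "A \<in> ob X" "A' \<in> ob X" using hom_ob assms by auto
  have z: "ezero X C A \<in> Ex X C A" using ez_Ex o assms by simp
  have "push X C a (ezero X C A) = push X C a (eadd X C A (ezero X C A) (ezero X C A))"
    using eadd_zero z o assms by simp
  also have "\<dots> = eadd X C A' (push X C a (ezero X C A)) (push X C a (ezero X C A))"
    using push_add assms z by blast
  finally show ?thesis using eadd_idem push_Ex assms z o by metis
qed

lemma pull_mz: assumes "A \<in> ob X" "C' \<in> ob X" "C \<in> ob X" "d \<in> Ex X C A"
  shows "pull X A (mzero X C' C) d = ezero X C' A"
proof -
  have m: "mzero X C' C \<in> hom X C' C" using mzero_hom assms by simp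
  have "pull X A (mzero X C' C) d = pull X A (madd X (mzero X C' C) (mzero X C' C)) d"
    using zz assms by simp
  also have "\<dots> = eadd X C' A (pull X A (mzero X C' C) d) (pull X A (mzero X C' C) d)"
    using pull_madd m assms by blast
  finally show ?thesis using eadd_idem pull_Ex assms m by metis
qed

lemma push_mz: assumes "A \<in> ob X" "A' \<in> ob X" "C \<in> ob X" "d \<in> Ex X C A"
  shows "push X C (mzero X A A') d = ezero X C A'"
proof -
  have m: "mzero X A A' \<in> hom X A A'" using mzero_hom assms by simp
  have "push X C (mzero X A A') d = push X C (madd X (mzero X A A') (mzero X A A')) d"
    using zz assms by simp
  also have "\<dots> = eadd X C A' (push X C (mzero X A A') d) (push X C (mzero X A A') d)"
    using push_madd m assms by blast
  finally show ?thesis using eadd_idem push_Ex assms m by metis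
qed

end

context extri_cat begin

lemmas R1 = ar[unfolded is_additive_realization_def, THEN conjunct1]
lemmas R2 = ar[unfolded is_additive_realization_def, THEN conjunct2, THEN conjunct1]
lemmas R4 = ar[unfolded is_additive_realization_def, THEN conjunct2, THEN conjunct2, THEN conjunct2, THEN conjunct1]
lemmas R5 = ar[unfolded is_additive_realization_def, THEN conjunct2, THEN conjunct2, THEN conjunct2, THEN conjunct2, THEN conjunct1]

lemma rlzD: assumes "rlz X C A d x y"
  shows "C \<in> ob X" "A \<in> ob X" "d \<in> Ex X C A" "cd X x \<in> ob X" "x \<in> hom X A (cd X x)"
        "y \<in> hom X (cd X x) C"
  using R1 assms by blast+

lemma rlz_ex: "C \<in> ob X \<Longrightarrow> A \<in> ob X \<Longrightarrow> d \<in> Ex X C A \<Longrightarrow> \<exists>x y. rlz X C A d x y"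
  using R2 by blast

lemma rlz_morph: "rlz X C A d x y \<Longrightarrow> rlz X C' A' d' x' y' \<Longrightarrow>
        a \<in> hom X A A' \<Longrightarrow> c \<in> hom X C C' \<Longrightarrow> push X C a d = pull X A' c d' \<Longrightarrow>
        (\<exists>b. tri_morph X A C d x y A' C' d' x' y' a b c)"
  using R4 by blast

lemma rlz_split: "A \<in> ob X \<Longrightarrow> C \<in> ob X \<Longrightarrow> is_biproduct X A C S i1 i2 p1 p2 \<Longrightarrow> rlz X C A (ezero X C A) i1 p2"
  using R5 by blast

lemma et3_rule: "rlz X C A d x y \<Longrightarrow> rlz X C' A' d' x' y' \<Longrightarrow>
     a \<in> hom X A A' \<Longrightarrow> b \<in> hom X (cd X x) (cd X x') \<Longrightarrow> cmp X b x = cmp X x' a \<Longrightarrow>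
     (\<exists>c. tri_morph X A C d x y A' C' d' x' y' a b c)"
  using et3 unfolding ET3_def by blast

lemma et3op_rule: "rlz X C A d x y \<Longrightarrow> rlz X C' A' d' x' y' \<Longrightarrow>
     b \<in> hom X (cd X x) (cd X x') \<Longrightarrow> c \<in> hom X C C' \<Longrightarrow> cmp X c y = cmp X y' b \<Longrightarrow>
     (\<exists>a. tri_morph X A C d x y A' C' d' x' y' a b c)"
  using et3op unfolding ET3op_def by blast

lemma biprodD: assumes "is_biproduct X A B S i1 i2 p1 p2"
  shows "S \<in> ob X" "i1 \<in> hom X A S" "i2 \<in> hom X B S" "p1 \<in> hom X S A" "p2 \<in> hom X S B"
   "cmp X p1 i1 = idm X A" "cmp X p2 i2 = idm X B"
  using assms unfolding is_biproduct_def by auto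

lemma biprodD2: assumes "is_biproduct X A B S i1 i2 p1 p2"
  shows "cmp X p1 i2 = mzero X B A" "cmp X p2 i1 = mzero X A B"
  using assms unfolding is_biproduct_def by auto

lemma infl_zero: assumes r: "rlz X C A d x y" shows "push X C x d = ezero X C (cd X x)"
proof -
  let ?B = "cd X x"
  have o: "?B \<in> ob X" "C \<in> ob X" "A \<in> ob X" "d \<in> Ex X C A" using rlzD[OF r] by auto
  obtain S i1 i2 p1 p2 where bp: "is_biproduct X ?B ?B S i1 i2 p1 p2" using biprod_ex o by blast
  have r2: "rlz X ?B ?B (ezero X ?B ?B) i1 p2" using rlz_split bp o by blast
  have i1: "i1 \<in> hom X ?B S" using biprodD[OF bp] by auto
  have "cd X i1 = S" using i1 hom_D by blast
  then have b: "i1 \<in> hom X (cd X x) (cd X i1)" using i1 by simp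
  obtain c where tm: "tri_morph X A C d x y ?B ?B (ezero X ?B ?B) i1 p2 x i1 c"
    using et3_rule[OF r r2 rlzD(5)[OF r] b] by blast
  then have c: "c \<in> hom X C ?B" and e: "push X C x d = pull X ?B c (ezero X ?B ?B)"
    unfolding tri_morph_def by auto
  show ?thesis using e pull_ez[OF o(1) c] by simp
qed

lemma defl_zero: assumes r: "rlz X C A d x y" shows "pull X A y d = ezero X (cd X x) A"
proof -
  let ?B = "cd X x"
  have o: "?B \<in> ob X" "C \<in> ob X" "A \<in> ob X" "d \<in> Ex X C A" using rlzD[OF r] by auto
  obtain S i1 i2 p1 p2 where bp: "is_biproduct X ?B ?B S i1 i2 p1 p2" using biprod_ex o by blast
  have r2: "rlz X ?B ?B (ezero X ?B ?B) i1 p2" using rlz_split bp o by blast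
  have i1: "i1 \<in> hom X ?B S" and p2: "p2 \<in> hom X S ?B" using biprodD[OF bp] by auto
  have "cd X i1 = S" using i1 hom_D by blast
  then have b: "p2 \<in> hom X (cd X i1) (cd X x)" using p2 by simp
  have y: "y \<in> hom X ?B C" using rlzD[OF r] by auto
  obtain a where tm: "tri_morph X ?B ?B (ezero X ?B ?B) i1 p2 A C d x y a p2 y"
    using et3op_rule[OF r2 r b y] by blast
  then have a: "a \<in> hom X ?B A" and e: "push X ?B a (ezero X ?B ?B) = pull X A y d"
    unfolding tri_morph_def by auto
  show ?thesis using e push_ez[OF o(1) a] by simp
qed

lemma defl_factor: assumes r: "rlz X C A d x y" and g: "g \<in> hom X W C"
  and z: "pull X A g d = ezero X W A"
  shows "\<exists>k\<in>hom X W (cd X x). g = cmp X y k"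
proof -
  have o: "C \<in> ob X" "A \<in> ob X" "d \<in> Ex X C A" "W \<in> ob X" using rlzD[OF r] hom_ob[OF g] by auto
  obtain S i1 i2 p1 p2 where bp: "is_biproduct X A W S i1 i2 p1 p2" using biprod_ex o by blast
  note B = biprodD[OF bp]
  have r2: "rlz X W A (ezero X W A) i1 p2" using rlz_split bp o by blast
  have "push X W (idm X A) (ezero X W A) = pull X A g d"
    using push_id ez_Ex o z by simp
  then obtain b where tm: "tri_morph X A W (ezero X W A) i1 p2 A C d x y (idm X A) b g"
    using rlz_morph[OF r2 r id_hom[OF o(2)] g] by blast
  have cdi: "cd X i1 = S" using B hom_D by blast
  have b: "b \<in> hom X S (cd X x)" and e: "cmp X g p2 = cmp X y b"
    using tm cdi unfolding tri_morph_def by auto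
  have y: "y \<in> hom X (cd X x) C" using rlzD[OF r] by auto
  have k: "cmp X b i2 \<in> hom X W (cd X x)" using cmp_hom B b by blast
  have "cmp X y (cmp X b i2) = cmp X (cmp X y b) i2" using assoc B b y by blast
  also have "\<dots> = cmp X (cmp X g p2) i2" using e by simp
  also have "\<dots> = cmp X g (cmp X p2 i2)" using assoc B g by metis
  also have "\<dots> = g" using B id_r g by simp
  finally show ?thesis using k by metis
qed

lemma infl_exact: assumes r: "rlz X C A d x y" and th: "t \<in> Ex X W A" and W: "W \<in> ob X"
  and z: "push X W x t = ezero X W (cd X x)"
  shows "\<exists>h\<in>hom X W C. t = pull X A h d"
proof -
  let ?B = "cd X x"
  have o: "C \<in> ob X" "A \<in> ob X" "d \<in> Ex X C A" "?B \<in> ob X" using rlzD[OF r] by auto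
  obtain u v where ru: "rlz X W A t u v" using rlz_ex W o th by blast
  obtain S i1 i2 p1 p2 where bp: "is_biproduct X ?B W S i1 i2 p1 p2" using biprod_ex o W by blast
  note B = biprodD[OF bp]
  have r2: "rlz X W ?B (ezero X W ?B) i1 p2" using rlz_split bp o W by blast
  have x: "x \<in> hom X A ?B" using rlzD[OF r] by auto
  have "push X W x t = pull X ?B (idm X W) (ezero X W ?B)"
    using pull_id ez_Ex o z W by simp
  then obtain b where tm: "tri_morph X A W t u v ?B W (ezero X W ?B) i1 p2 x b (idm X W)"
    using rlz_morph[OF ru r2 x id_hom[OF W]] by blast
  have cdi: "cd X i1 = S" using B hom_D by blast
  have b: "b \<in> hom X (cd X u) S" and e: "cmp X b u = cmp X i1 x"
    using tm cdi unfolding tri_morph_def by auto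
  have u: "u \<in> hom X A (cd X u)" using rlzD[OF ru] by auto
  have tt: "cmp X p1 b \<in> hom X (cd X u) (cd X x)" using cmp_hom B b by blast
  have "cmp X (cmp X p1 b) u = cmp X p1 (cmp X b u)" using assoc u b B by metis
  also have "\<dots> = cmp X p1 (cmp X i1 x)" using e by simp
  also have "\<dots> = cmp X (cmp X p1 i1) x" using assoc x B by metis
  also have "\<dots> = cmp X x (idm X A)" using B id_l id_r x by simp
  finally have ee: "cmp X (cmp X p1 b) u = cmp X x (idm X A)" .
  obtain c where tm2: "tri_morph X A W t u v A C d x y (idm X A) (cmp X p1 b) c"
    using et3_rule[OF ru r id_hom[OF o(2)] tt ee] by blast
  then have c: "c \<in> hom X W C" and e2: "push X W (idm X A) t = pull X A c d"
    unfolding tri_morph_def by auto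
  show ?thesis using c e2 push_id o W th by auto
qed

lemma defl_exact: assumes r: "rlz X C A d x y" and th: "t \<in> Ex X C W" and W: "W \<in> ob X"
  and z: "pull X W y t = ezero X (cd X x) W"
  shows "\<exists>f\<in>hom X A W. t = push X C f d"
proof -
  let ?B = "cd X x"
  have o: "C \<in> ob X" "A \<in> ob X" "d \<in> Ex X C A" "?B \<in> ob X" using rlzD[OF r] by auto
  obtain u v where ru: "rlz X C W t u v" using rlz_ex W o th by blast
  obtain S i1 i2 p1 p2 where bp: "is_biproduct X W ?B S i1 i2 p1 p2" using biprod_ex o W by blast
  note B = biprodD[OF bp]
  have r2: "rlz X ?B W (ezero X ?B W) i1 p2" using rlz_split bp o W by blast
  have y: "y \<in> hom X ?B C" using rlzD[OF r] by auto
  have "push X ?B (idm X W) (ezero X ?B W) = pull X W y t"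
    using push_id ez_Ex o z W by simp
  then obtain b where tm: "tri_morph X W ?B (ezero X ?B W) i1 p2 W C t u v (idm X W) b y"
    using rlz_morph[OF r2 ru id_hom[OF W] y] by blast
  have cdi: "cd X i1 = S" using B hom_D by blast
  have b: "b \<in> hom X S (cd X u)" and e: "cmp X y p2 = cmp X v b"
    using tm cdi unfolding tri_morph_def by auto
  have v: "v \<in> hom X (cd X u) C" using rlzD[OF ru] by auto
  have ss: "cmp X b i2 \<in> hom X (cd X x) (cd X u)" using cmp_hom B b by blast
  have "cmp X v (cmp X b i2) = cmp X (cmp X v b) i2" using assoc v b B by metis
  also have "\<dots> = cmp X (cmp X y p2) i2" using e by simp
  also have "\<dots> = cmp X y (cmp X p2 i2)" using assoc y B by metis
  also have "\<dots> = cmp X (idm X C) y" using B id_l id_r y by simp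
  finally have ee: "cmp X (idm X C) y = cmp X v (cmp X b i2)" by simp
  obtain a where tm2: "tri_morph X A C d x y W C t u v a (cmp X b i2) (idm X C)"
    using et3op_rule[OF r ru ss id_hom[OF o(1)] ee] by blast
  then have a: "a \<in> hom X A W" and e2: "push X C a d = pull X W (idm X C) t"
    unfolding tri_morph_def by auto
  show ?thesis using a e2 pull_id o W th by auto
qed

end

context extri_cat begin

lemma ideal_mor: "is_ideal X I \<Longrightarrow> I \<subseteq> mor X" unfolding is_ideal_def by blast

lemma ideal_cl: "is_ideal X I \<Longrightarrow> f \<in> hom X A B \<Longrightarrow> g \<in> I \<Longrightarrow> g \<in> hom X B C \<Longrightarrow> h \<in> hom X C D \<Longrightarrow>
        cmp X h (cmp X g f) \<in> I"
  unfolding is_ideal_def by blast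

lemma ideal_l: assumes "is_ideal X I" "g \<in> I" "g \<in> hom X B C" "h \<in> hom X C D" shows "cmp X h g \<in> I"
proof -
  have "B \<in> ob X" using hom_ob assms by blast
  then show ?thesis using ideal_cl[OF assms(1) id_hom assms(2-4)] id_r assms by simp
qed

lemma ideal_r: assumes "is_ideal X I" "f \<in> hom X A B" "g \<in> I" "g \<in> hom X B C" shows "cmp X g f \<in> I"
proof -
  have "C \<in> ob X" using hom_ob assms by blast
  then show ?thesis using ideal_cl[OF assms(1-4) id_hom] id_l cmp_hom assms by metis
qed

lemma I_sub_lperp: assumes "is_ideal X I" shows "I \<subseteq> lperp X (rperp X I)"
  using ideal_mor[OF assms] unfolding lperp_def rperp_def by blast

lemma I_eq_Ph: assumes id: "is_ideal X I" and eq: "I = lperp X (rperp X I)"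
  shows "I = Ph X (Istar X I)"
proof
  show "I \<subseteq> Ph X (Istar X I)"
  proof
    fix p assume p: "p \<in> I"
    then have pm: "p \<in> mor X" using ideal_mor id by blast
    have "\<forall>A\<in>ob X. \<forall>d\<in>Ex X (cd X p) A. pull X A p d \<in> Istar X I (dm X p) A"
      unfolding Istar_def using p pm mor_ob mor_hom by blast
    then show "p \<in> Ph X (Istar X I)" unfolding Ph_def using pm by blast
  qed
next
  show "Ph X (Istar X I) \<subseteq> I"
  proof
    fix p assume p: "p \<in> Ph X (Istar X I)"
    then have pm: "p \<in> mor X" unfolding Ph_def by blast
    have "p \<in> lperp X (rperp X I)" unfolding lperp_def
    proof (intro CollectI conjI ballI pm)
      fix m d assume m: "m \<in> rperp X I" and d: "d \<in> Ex X (cd X p) (dm X m)"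
      have mm: "m \<in> mor X" using m unfolding rperp_def by blast
      have ob: "dm X m \<in> ob X" using mor_ob mm by blast
      have "pull X (dm X m) p d \<in> Istar X I (dm X p) (dm X m)" using p ob d unfolding Ph_def by blast
      then obtain i d0 C0 where i: "C0 \<in> ob X" "i \<in> I" "i \<in> hom X (dm X p) C0" "d0 \<in> Ex X C0 (dm X m)"
        and eq1: "pull X (dm X m) p d = pull X (dm X m) i d0" unfolding Istar_def by blast
      have "pull X (cd X m) p (push X (cd X p) m d) = push X (dm X p) m (pull X (dm X m) p d)"
        using push_pull[OF mor_hom[OF mm] mor_hom[OF pm] d] by simp
      also have "\<dots> = push X (dm X p) m (pull X (dm X m) i d0)" using eq1 by simp
      also have "\<dots> = pull X (cd X m) i (push X C0 m d0)" using push_pull[OF mor_hom[OF mm] i(3) i(4)] .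
      also have "\<dots> = ezero X (dm X p) (cd X m)"
        using m i hom_D[OF i(3)] unfolding rperp_def by force
      finally show "pull X (cd X m) p (push X (cd X p) m d) = ezero X (dm X p) (cd X m)" .
    qed
    then show "p \<in> I" using eq by simp
  qed
qed

lemma partIII: assumes id: "is_ideal X I" and cc: "complete_cotorsion_pair X I (rperp X I)"
  shows "enough_special_inj_morphisms X (Istar X I) \<and> I = Ph X (Istar X I)"
proof -
  have eq: "I = lperp X (rperp X I)" and sp: "special_preenveloping X (rperp X I)"
    using cc unfolding complete_cotorsion_pair_def is_cotorsion_pair_def by auto
  have ph: "I = Ph X (Istar X I)" using I_eq_Ph[OF id eq] .
  have "enough_special_inj_morphisms X (Istar X I)" unfolding enough_special_inj_morphisms_def
  proof
    fix A assume A: "A \<in> ob X"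
    obtain e where "special_preenvelope X (rperp X I) A e" using sp A unfolding special_preenveloping_def by blast
    then obtain Y d y C d' x' y' b j where e: "e \<in> rperp X I" "dm X e = A" and
        r1: "rlz X Y A d e y" and r2: "rlz X C A d' x' y'" and
        tm: "tri_morph X A Y d e y A C d' x' y' (idm X A) b j" and j: "j \<in> lperp X (rperp X I)"
      unfolding special_preenvelope_def by blast
    have jI: "j \<in> I" using j eq by simp
    have jh: "j \<in> hom X Y C" and dd: "push X Y (idm X A) d = pull X A j d'"
      using tm unfolding tri_morph_def by auto
    have o: "Y \<in> ob X" "d \<in> Ex X Y A" "C \<in> ob X" "d' \<in> Ex X C A" using rlzD r1 r2 by auto
    have deq: "d = pull X A j d'" using dd push_id A o by simp
    have dI: "d \<in> Istar X I Y A" unfolding Istar_def using deq o jI jh by blast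
    have em: "e \<in> mor X" using e unfolding rperp_def by blast
    have eF: "e \<in> F_inj X (Istar X I)" unfolding F_inj_def
    proof (intro CollectI conjI ballI em)
      fix C0 t assume C0: "C0 \<in> ob X" and t: "t \<in> Istar X I C0 (dm X e)"
      then obtain i d0 C1 where i: "C1 \<in> ob X" "i \<in> I" "i \<in> hom X C0 C1" "d0 \<in> Ex X C1 (dm X e)"
        and teq: "t = pull X (dm X e) i d0" unfolding Istar_def by blast
      have "push X C0 e t = pull X (cd X e) i (push X C1 e d0)"
        using push_pull[OF mor_hom[OF em] i(3) i(4)] teq by simp
      also have "\<dots> = ezero X C0 (cd X e)"
        using e(1) i hom_D[OF i(3)] unfolding rperp_def by force
      finally show "push X C0 e t = ezero X C0 (cd X e)" .
    qed
    show "\<exists>C d e y. rlz X C A d e y \<and> d \<in> Istar X I C A \<and> e \<in> F_inj X (Istar X I) \<and>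
      (\<exists>C' d' x' y' b phi. rlz X C' A d' x' y' \<and>
         tri_morph X A C d e y A C' d' x' y' (idm X A) b phi \<and> phi \<in> Ph X (Istar X I))"
      using r1 dI eF r2 tm jI ph by blast
  qed
  then show ?thesis using ph by blast
qed

end

context extri_cat begin

lemma IstarI: "C1 \<in> ob X \<Longrightarrow> i \<in> I \<Longrightarrow> i \<in> hom X C C1 \<Longrightarrow> d \<in> Ex X C1 A \<Longrightarrow> t = pull X A i d
   \<Longrightarrow> t \<in> Istar X I C A"
  unfolding Istar_def by blast

lemma ideal_add: "is_ideal X I \<Longrightarrow> f \<in> I \<Longrightarrow> f \<in> hom X A B \<Longrightarrow> g \<in> I \<Longrightarrow> g \<in> hom X A B \<Longrightarrow> madd X f g \<in> I"
  unfolding is_ideal_def by blast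

lemma Istar_add: assumes id: "is_ideal X I" and C: "C \<in> ob X" and A: "A \<in> ob X"
  and d: "d \<in> Istar X I C A" and e: "e \<in> Istar X I C A"
  shows "eadd X C A d e \<in> Istar X I C A"
proof -
  obtain i d1 C1 where i: "C1 \<in> ob X" "i \<in> I" "i \<in> hom X C C1" "d1 \<in> Ex X C1 A"
    and deq: "d = pull X A i d1" using d unfolding Istar_def by blast
  obtain i' d2 C2 where i': "C2 \<in> ob X" "i' \<in> I" "i' \<in> hom X C C2" "d2 \<in> Ex X C2 A"
    and eeq: "e = pull X A i' d2" using e unfolding Istar_def by blast
  obtain S j1 j2 p1 p2 where bp: "is_biproduct X C1 C2 S j1 j2 p1 p2" using biprod_ex i i' by blast
  note B = biprodD[OF bp] biprodD2[OF bp]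
  define k where "k = madd X (cmp X j1 i) (cmp X j2 i')"
  have k1: "cmp X j1 i \<in> hom X C S" "cmp X j2 i' \<in> hom X C S" using cmp_hom B i i' by blast+
  have kh: "k \<in> hom X C S" unfolding k_def using madd_hom k1 by blast
  have kI: "k \<in> I" unfolding k_def using ideal_add[OF id ideal_l[OF id i(2) i(3) B(2)] k1(1) ideal_l[OF id i'(2) i'(3) B(3)] k1(2)] .
  have q1: "pull X A p1 d1 \<in> Ex X S A" "pull X A p2 d2 \<in> Ex X S A" using pull_Ex A B i i' by blast+
  define D where "D = eadd X S A (pull X A p1 d1) (pull X A p2 d2)"
  have DE: "D \<in> Ex X S A" unfolding D_def using eadd_Ex q1 B A by blast
  have c1: "pull X A j1 D = d1"
  proof -
    have "pull X A j1 D = eadd X C1 A (pull X A j1 (pull X A p1 d1)) (pull X A j1 (pull X A p2 d2))"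
      unfolding D_def using pull_add A B q1 by blast
    also have "\<dots> = eadd X C1 A (pull X A (cmp X p1 j1) d1) (pull X A (cmp X p2 j1) d2)"
      using pull_cmp[OF A B(4) B(2) i(4)] pull_cmp[OF A B(5) B(2) i'(4)] by simp
    also have "\<dots> = eadd X C1 A d1 (ezero X C1 A)" using B(6) B(9) pull_id[OF A i(1) i(4)] pull_mz[OF A i(1) i'(1) i'(4)] by simp
    also have "\<dots> = d1" using eadd_zero i A by simp
    finally show ?thesis .
  qed
  have c2: "pull X A j2 D = d2"
  proof -
    have "pull X A j2 D = eadd X C2 A (pull X A j2 (pull X A p1 d1)) (pull X A j2 (pull X A p2 d2))"
      unfolding D_def using pull_add A B q1 by blast
    also have "\<dots> = eadd X C2 A (pull X A (cmp X p1 j2) d1) (pull X A (cmp X p2 j2) d2)"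
      using pull_cmp[OF A B(4) B(3) i(4)] pull_cmp[OF A B(5) B(3) i'(4)] by simp
    also have "\<dots> = eadd X C2 A (ezero X C2 A) d2" using B(7) B(8) pull_id[OF A i'(1) i'(4)] pull_mz[OF A i'(1) i(1) i(4)] by simp
    also have "\<dots> = d2" using eadd_zero[OF i'(1) A i'(4)] eadd_comm[OF i'(1) A i'(4) ez_Ex[OF i'(1) A]] by simp
    finally show ?thesis .
  qed
  have "pull X A k D = eadd X C A (pull X A (cmp X j1 i) D) (pull X A (cmp X j2 i') D)"
    unfolding k_def using pull_madd A k1 DE by blast
  also have "\<dots> = eadd X C A (pull X A i (pull X A j1 D)) (pull X A i' (pull X A j2 D))"
    using pull_cmp[OF A B(2) i(3) DE] pull_cmp[OF A B(3) i'(3) DE] by simp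
  also have "\<dots> = eadd X C A d e" using c1 c2 deq eeq by simp
  finally show ?thesis using IstarI[OF B(1) kI kh DE] by simp
qed

lemma partIV: assumes id: "is_ideal X I" shows "is_additive_subfunctor X (Istar X I)"
  unfolding is_additive_subfunctor_def
proof (intro conjI allI impI ballI)
  fix C A assume C: "C \<in> ob X" and A: "A \<in> ob X"
  show "Istar X I C A \<subseteq> Ex X C A"
  proof
    fix t assume "t \<in> Istar X I C A"
    then obtain i d1 C1 where i: "C1 \<in> ob X" "i \<in> I" "i \<in> hom X C C1" "d1 \<in> Ex X C1 A"
      and deq: "t = pull X A i d1" unfolding Istar_def by blast
    show "t \<in> Ex X C A" using pull_Ex[OF A i(3) i(4)] deq by simp
  qed
  have "mzero X C C \<in> I" using id C unfolding is_ideal_def by blast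
  moreover have "pull X A (mzero X C C) (ezero X C A) = ezero X C A" using pull_mz C A ez_Ex by blast
  ultimately show "ezero X C A \<in> Istar X I C A" using IstarI[OF C _ mzero_hom[OF C C] ez_Ex[OF C A]] by simp
  fix d e assume d: "d \<in> Istar X I C A"
  { assume e: "e \<in> Istar X I C A"
    show "eadd X C A d e \<in> Istar X I C A" using Istar_add id C A d e by blast }
  { assume e: "e \<in> Ex X C A" and s: "eadd X C A d e = ezero X C A"
    obtain i d1 C1 where i: "C1 \<in> ob X" "i \<in> I" "i \<in> hom X C C1" "d1 \<in> Ex X C1 A"
      and deq: "d = pull X A i d1" using d unfolding Istar_def by blast
    obtain n where n: "n \<in> Ex X C1 A" "eadd X C1 A d1 n = ezero X C1 A" using eadd_inv i A by blast
    have dE: "d \<in> Ex X C A" using deq pull_Ex A i by blast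
    have nE: "pull X A i n \<in> Ex X C A" using pull_Ex A i n by blast
    have "eadd X C A d (pull X A i n) = ezero X C A"
      using pull_add[OF A i(3) i(4) n(1)] n pull_ez A i deq by simp
    then have "e = pull X A i n" using eadd_inv_uniq[OF C A dE e nE s] by simp
    then show "e \<in> Istar X I C A" using IstarI[OF i(1) i(2) i(3) n(1)] by simp }
next
  fix C A A' a d assume a: "a \<in> hom X A A'" and C: "C \<in> ob X" and d: "d \<in> Istar X I C A"
  obtain i d1 C1 where i: "C1 \<in> ob X" "i \<in> I" "i \<in> hom X C C1" "d1 \<in> Ex X C1 A"
    and deq: "d = pull X A i d1" using d unfolding Istar_def by blast
  have "push X C a d = pull X A' i (push X C1 a d1)" using push_pull a i deq by simp
  moreover have "push X C1 a d1 \<in> Ex X C1 A'" using push_Ex i a by blast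
  ultimately show "push X C a d \<in> Istar X I C A'" using IstarI[OF i(1) i(2) i(3)] by simp
next
  fix C C' A c d assume c: "c \<in> hom X C' C" and A: "A \<in> ob X" and d: "d \<in> Istar X I C A"
  obtain i d1 C1 where i: "C1 \<in> ob X" "i \<in> I" "i \<in> hom X C C1" "d1 \<in> Ex X C1 A"
    and deq: "d = pull X A i d1" using d unfolding Istar_def by blast
  have "pull X A c d = pull X A (cmp X i c) d1" using pull_cmp[OF A i(3) c i(4)] deq by simp
  moreover have "cmp X i c \<in> I" "cmp X i c \<in> hom X C' C1" using ideal_r id c i cmp_hom by blast+
  ultimately show "pull X A c d \<in> Istar X I C' A" using IstarI[OF i(1)] i by simp
qed

end

context extri_cat begin

lemma rperpD: "g \<in> rperp X I \<Longrightarrow> m \<in> I \<Longrightarrow> d \<in> Ex X (cd X m) (dm X g) \<Longrightarrow>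
   pull X (cd X g) m (push X (cd X m) g d) = ezero X (dm X m) (cd X g)"
  unfolding rperp_def by blast

lemma rperp_mor: "g \<in> rperp X I \<Longrightarrow> g \<in> mor X" unfolding rperp_def by blast

lemma rperpI: "g \<in> mor X \<Longrightarrow> (\<And>m d. m \<in> I \<Longrightarrow> d \<in> Ex X (cd X m) (dm X g) \<Longrightarrow>
   pull X (cd X g) m (push X (cd X m) g d) = ezero X (dm X m) (cd X g)) \<Longrightarrow> g \<in> rperp X I"
  unfolding rperp_def by blast

lemma rperp_ideal: assumes id: "is_ideal X I" shows "is_ideal X (rperp X I)"
  unfolding is_ideal_def
proof (intro conjI allI ballI impI)
  show "rperp X I \<subseteq> mor X" using rperp_mor by blast
next
  fix A B assume A: "A \<in> ob X" and B: "B \<in> ob X"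
  have z: "mzero X A B \<in> hom X A B" using mzero_hom A B by blast
  show "mzero X A B \<in> rperp X I"
  proof (rule rperpI)
    show "mzero X A B \<in> mor X" using z hom_D by blast
    fix m d assume m: "m \<in> I" and d: "d \<in> Ex X (cd X m) (dm X (mzero X A B))"
    have mm: "m \<in> hom X (dm X m) (cd X m)" using m ideal_mor[OF id] mor_hom by blast
    have o: "cd X m \<in> ob X" "dm X m \<in> ob X" using hom_ob mm by auto
    have dz: "dm X (mzero X A B) = A" "cd X (mzero X A B) = B" using hom_D z by auto
    show "pull X (cd X (mzero X A B)) m (push X (cd X m) (mzero X A B) d) = ezero X (dm X m) (cd X (mzero X A B))"
      using push_mz[OF A B o(1)] d dz pull_ez[OF B mm] by simp
  qed
next
  fix A B f g assume f: "f \<in> rperp X I \<inter> hom X A B" and g: "g \<in> rperp X I \<inter> hom X A B"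
  have fh: "f \<in> hom X A B" and gh: "g \<in> hom X A B" using f g by auto
  have s: "madd X f g \<in> hom X A B" using madd_hom fh gh by blast
  have B: "B \<in> ob X" using hom_ob fh by blast
  show "madd X f g \<in> rperp X I"
  proof (rule rperpI)
    show "madd X f g \<in> mor X" using s hom_D by blast
    fix m d assume m: "m \<in> I" and d: "d \<in> Ex X (cd X m) (dm X (madd X f g))"
    have mm: "m \<in> hom X (dm X m) (cd X m)" using m ideal_mor[OF id] mor_hom by blast
    have o: "cd X m \<in> ob X" "dm X m \<in> ob X" using hom_ob mm by auto
    have ds: "dm X (madd X f g) = A" "cd X (madd X f g) = B" using hom_D s by auto
    have df: "dm X f = A" "cd X f = B" "dm X g = A" "cd X g = B" using hom_D fh gh by auto
    have dA: "d \<in> Ex X (cd X m) A" using d ds by simp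
    have p1: "push X (cd X m) f d \<in> Ex X (cd X m) B" "push X (cd X m) g d \<in> Ex X (cd X m) B"
      using push_Ex[OF o(1) fh dA] push_Ex[OF o(1) gh dA] by auto
    have "pull X B m (push X (cd X m) (madd X f g) d)
        = pull X B m (eadd X (cd X m) B (push X (cd X m) f d) (push X (cd X m) g d))"
      using push_madd[OF o(1) fh gh dA] by simp
    also have "\<dots> = eadd X (dm X m) B (pull X B m (push X (cd X m) f d)) (pull X B m (push X (cd X m) g d))"
      using pull_add[OF B mm p1] .
    also have "\<dots> = eadd X (dm X m) B (ezero X (dm X m) B) (ezero X (dm X m) B)"
      using rperpD[of f I m d] rperpD[of g I m d] f g m dA df by simp
    also have "\<dots> = ezero X (dm X m) B" using eadd_zero ez_Ex o B by simp
    finally show "pull X (cd X (madd X f g)) m (push X (cd X m) (madd X f g) d) = ezero X (dm X m) (cd X (madd X f g))"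
      using ds by simp
  qed
next
  fix A B C D f g h assume f: "f \<in> hom X A B" and g: "g \<in> rperp X I \<inter> hom X B C" and h: "h \<in> hom X C D"
  have gh: "g \<in> hom X B C" using g by auto
  have c: "cmp X h (cmp X g f) \<in> hom X A D" using cmp_hom f gh h by blast
  show "cmp X h (cmp X g f) \<in> rperp X I"
  proof (rule rperpI)
    show "cmp X h (cmp X g f) \<in> mor X" using c hom_D by blast
    fix m d assume m: "m \<in> I" and d: "d \<in> Ex X (cd X m) (dm X (cmp X h (cmp X g f)))"
    have mm: "m \<in> hom X (dm X m) (cd X m)" using m ideal_mor[OF id] mor_hom by blast
    have o: "cd X m \<in> ob X" "dm X m \<in> ob X" using hom_ob mm by auto
    have ds: "dm X (cmp X h (cmp X g f)) = A" "cd X (cmp X h (cmp X g f)) = D" using hom_D c by auto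
    have dg: "dm X g = B" "cd X g = C" using hom_D gh by auto
    have dA: "d \<in> Ex X (cd X m) A" using d ds by simp
    have p1: "push X (cd X m) f d \<in> Ex X (cd X m) B" using push_Ex[OF o(1) f dA] .
    have p2: "push X (cd X m) g (push X (cd X m) f d) \<in> Ex X (cd X m) C" using push_Ex[OF o(1) gh p1] .
    have gf: "cmp X g f \<in> hom X A C" using cmp_hom f gh by blast
    have "push X (cd X m) (cmp X h (cmp X g f)) d = push X (cd X m) h (push X (cd X m) g (push X (cd X m) f d))"
      using push_cmp[OF o(1) gf h dA] push_cmp[OF o(1) f gh dA] by simp
    then have "pull X D m (push X (cd X m) (cmp X h (cmp X g f)) d)
        = push X (dm X m) h (pull X C m (push X (cd X m) g (push X (cd X m) f d)))"
      using push_pull[OF h mm p2] by simp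
    also have "\<dots> = push X (dm X m) h (ezero X (dm X m) C)"
      using rperpD[of g I m "push X (cd X m) f d"] g m p1 dg by simp
    also have "\<dots> = ezero X (dm X m) D" using push_ez[OF o(2) h] .
    finally show "pull X (cd X (cmp X h (cmp X g f))) m (push X (cd X m) (cmp X h (cmp X g f)) d) =
        ezero X (dm X m) (cd X (cmp X h (cmp X g f)))" using ds by simp
  qed
qed

lemma sp_factor: assumes id: "is_ideal X I" and sp: "special_precover X I C i"
  and g: "g \<in> hom X W C" and gl: "g \<in> lperp X (rperp X I)"
  shows "\<exists>k\<in>hom X W (dm X i). g = cmp X i k"
proof -
  obtain A d x y A' d' x' b j where r1: "rlz X C A d x y" and r2: "rlz X C A' d' x' i" and
    tm: "tri_morph X A C d x y A' C d' x' i j b (idm X C)" and j: "j \<in> rperp X I"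
    using sp unfolding special_precover_def by blast
  have o: "C \<in> ob X" "A \<in> ob X" "d \<in> Ex X C A" "A' \<in> ob X" "d' \<in> Ex X C A'" using rlzD r1 r2 by auto
  have jh: "j \<in> hom X A A'" and pe: "push X C j d = pull X A' (idm X C) d'"
    using tm unfolding tri_morph_def by auto
  have dd: "d' = push X C j d" using pe pull_id o by simp
  have dj: "dm X j = A" "cd X j = A'" using hom_D jh by auto
  have dg: "dm X g = W" "cd X g = C" using hom_D g by auto
  have "pull X A' g d' = pull X A' g (push X C j d)" using dd by simp
  also have "\<dots> = ezero X W A'" using gl j o dj dg unfolding lperp_def by force
  finally have "pull X A' g d' = ezero X W A'" .
  from defl_factor[OF r2 g this] obtain k where k: "k \<in> hom X W (cd X x')" "g = cmp X i k" by blast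
  have "dm X i = cd X x'" using rlzD(6)[OF r2] hom_D by blast
  then show ?thesis using k by auto
qed

lemma sp_in_I: "special_precover X I C i \<Longrightarrow> i \<in> I" unfolding special_precover_def by blast
lemma sp_hom: "special_precover X I C i \<Longrightarrow> i \<in> hom X (dm X i) C"
  unfolding special_precover_def using rlzD(6) hom_D by metis

lemma lperp_eq: assumes id: "is_ideal X I" and spc: "special_precovering X I"
  shows "I = lperp X (rperp X I)"
proof
  show "I \<subseteq> lperp X (rperp X I)" using I_sub_lperp[OF id] .
  show "lperp X (rperp X I) \<subseteq> I"
  proof
    fix g assume gl: "g \<in> lperp X (rperp X I)"
    have gm: "g \<in> mor X" using gl unfolding lperp_def by blast
    have gh: "g \<in> hom X (dm X g) (cd X g)" using mor_hom gm .
    obtain i where sp: "special_precover X I (cd X g) i" using spc mor_ob gm unfolding special_precovering_def by blast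
    obtain k where k: "k \<in> hom X (dm X g) (dm X i)" "g = cmp X i k" using sp_factor[OF id sp gh gl] by blast
    show "g \<in> I" using ideal_r[OF id k(1) sp_in_I[OF sp] sp_hom[OF sp]] k by simp
  qed
qed

lemma partII: assumes id: "is_ideal X I" and ei: "enough_inj_objects X" and spc: "special_precovering X I"
  shows "complete_cotorsion_pair X I (rperp X I)"
proof -
  have eq: "I = lperp X (rperp X I)" using lperp_eq id spc by blast
  have "special_preenveloping X (rperp X I)" unfolding special_preenveloping_def
  proof
    fix A assume A: "A \<in> ob X"
    obtain C d x0 y0 where r0: "rlz X C A d x0 y0" and inj: "\<forall>Y\<in>ob X. Ex X Y (cd X x0) = {ezero X Y (cd X x0)}"
      using ei A unfolding enough_inj_objects_def by blast
    have o: "C \<in> ob X" "d \<in> Ex X C A" using rlzD r0 by auto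
    obtain i where sp: "special_precover X I C i" using spc o unfolding special_precovering_def by blast
    have iI: "i \<in> I" and ih: "i \<in> hom X (dm X i) C" using sp_in_I sp_hom sp by auto
    let ?Xs = "dm X i"
    have th: "pull X A i d \<in> Ex X ?Xs A" using pull_Ex A ih o by blast
    have Xo: "?Xs \<in> ob X" using hom_ob ih by blast
    obtain e y where r1: "rlz X ?Xs A (pull X A i d) e y" using rlz_ex Xo A th by blast
    have "push X ?Xs (idm X A) (pull X A i d) = pull X A i d" using push_id A Xo th by simp
    then obtain b where tm: "tri_morph X A ?Xs (pull X A i d) e y A C d x0 y0 (idm X A) b i"
      using rlz_morph[OF r1 r0 id_hom[OF A] ih] by blast
    have eh: "e \<in> hom X A (cd X e)" using rlzD(5)[OF r1] .
    have de: "dm X e = A" using hom_D eh by blast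
    have eR: "e \<in> rperp X I"
    proof (rule rperpI)
      show "e \<in> mor X" using eh hom_D by blast
      fix m t assume m: "m \<in> I" and t: "t \<in> Ex X (cd X m) (dm X e)"
      have mm: "m \<in> hom X (dm X m) (cd X m)" using m ideal_mor[OF id] mor_hom by blast
      have om: "cd X m \<in> ob X" "dm X m \<in> ob X" using hom_ob mm by auto
      have tA: "t \<in> Ex X (cd X m) A" using t de by simp
      have "push X (cd X m) x0 t \<in> Ex X (cd X m) (cd X x0)" using push_Ex om rlzD(5)[OF r0] tA by blast
      then have "push X (cd X m) x0 t = ezero X (cd X m) (cd X x0)" using inj om by blast
      from infl_exact[OF r0 tA om(1) this] obtain h where h: "h \<in> hom X (cd X m) C" "t = pull X A h d" by blast
      let ?n = "cmp X h m"
      have nh: "?n \<in> hom X (dm X m) C" using cmp_hom mm h by blast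
      have nI: "?n \<in> I" using ideal_l[OF id m mm h(1)] .
      obtain k where k: "k \<in> hom X (dm X m) ?Xs" "?n = cmp X i k"
        using sp_factor[OF id sp nh] nI eq by blast
      have Bo: "cd X e \<in> ob X" using hom_ob eh by blast
      have pe: "push X C e d \<in> Ex X C (cd X e)" using push_Ex o eh by blast
      have "pull X (cd X e) m (push X (cd X m) e t) = pull X (cd X e) m (pull X (cd X e) h (push X C e d))"
        using push_pull[OF eh h(1) o(2)] h(2) by simp
      also have "\<dots> = pull X (cd X e) ?n (push X C e d)" using pull_cmp[OF Bo h(1) mm pe] by simp
      also have "\<dots> = pull X (cd X e) k (pull X (cd X e) i (push X C e d))"
        using pull_cmp[OF Bo ih k(1) pe] k(2) by simp
      also have "\<dots> = pull X (cd X e) k (push X ?Xs e (pull X A i d))"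
        using push_pull[OF eh ih o(2)] by simp
      also have "\<dots> = pull X (cd X e) k (ezero X ?Xs (cd X e))" using infl_zero[OF r1] by simp
      also have "\<dots> = ezero X (dm X m) (cd X e)" using pull_ez[OF Bo k(1)] .
      finally show "pull X (cd X e) m (push X (cd X m) e t) = ezero X (dm X m) (cd X e)" .
    qed
    have "i \<in> lperp X (rperp X I)" using iI eq by simp
    then show "\<exists>e. special_preenvelope X (rperp X I) A e"
      unfolding special_preenvelope_def using eR de r1 r0 tm by blast
  qed
  then show ?thesis unfolding complete_cotorsion_pair_def is_cotorsion_pair_def
    using id rperp_ideal[OF id] eq spc by blast
qed

end

context extri_cat begin

lemma partI: assumes ep: "enough_proj_morphisms X" and sf: "is_additive_subfunctor X F"
  and ei: "enough_inj_morphisms X F"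
  shows "special_precovering X (Ph X F)"
  unfolding special_precovering_def
proof
  fix C assume C: "C \<in> ob X"
  obtain K g k p where rg: "rlz X C K g k p"
    and pz: "\<forall>A\<in>ob X. \<forall>d\<in>Ex X C A. pull X A p d = ezero X (dm X p) A"
    using ep C unfolding enough_proj_morphisms_def by blast
  have oK: "K \<in> ob X" "g \<in> Ex X C K" using rlzD rg by auto
  have ph: "p \<in> hom X (cd X k) C" using rlzD(6)[OF rg] .
  have dp: "dm X p = cd X k" using hom_D ph by blast
  obtain Y eps e y where re: "rlz X Y K eps e y" and epsF: "eps \<in> F Y K" and eF: "e \<in> F_inj X F"
    using ei oK unfolding enough_inj_morphisms_def by blast
  have eh: "e \<in> hom X K (cd X e)" using rlzD(5)[OF re] .
  have Bo: "cd X e \<in> ob X" using hom_ob eh by blast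
  have d'E: "push X C e g \<in> Ex X C (cd X e)" using push_Ex C eh oK by blast
  obtain x' i where r': "rlz X C (cd X e) (push X C e g) x' i" using rlz_ex C Bo d'E by blast
  have "push X C e g = pull X (cd X e) (idm X C) (push X C e g)" using pull_id Bo C d'E by simp
  then obtain b where tm: "tri_morph X K C g k p (cd X e) C (push X C e g) x' i e b (idm X C)"
    using rlz_morph[OF rg r' eh id_hom[OF C]] by blast
  have ih: "i \<in> hom X (cd X x') C" using rlzD(6)[OF r'] .
  have di: "dm X i = cd X x'" "cd X i = C" using hom_D ih by auto
  have Zo: "cd X x' \<in> ob X" using rlzD(4)[OF r'] .
  have eR: "e \<in> rperp X (Ph X F)"
  proof (rule rperpI)
    show "e \<in> mor X" using eh hom_D by blast
    fix m t assume m: "m \<in> Ph X F" and t: "t \<in> Ex X (cd X m) (dm X e)"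
    have mm: "m \<in> mor X" using m unfolding Ph_def by blast
    have de: "dm X e = K" using hom_D eh by blast
    have tK: "t \<in> Ex X (cd X m) K" using t de by simp
    have "pull X K m t \<in> F (dm X m) K" using m oK tK unfolding Ph_def by blast
    then have "push X (dm X m) e (pull X K m t) = ezero X (dm X m) (cd X e)"
      using eF mor_ob mm de unfolding F_inj_def by blast
    then show "pull X (cd X e) m (push X (cd X m) e t) = ezero X (dm X m) (cd X e)"
      using push_pull[OF eh mor_hom[OF mm] tK] by simp
  qed
  have iP: "i \<in> Ph X F" unfolding Ph_def
  proof (intro CollectI conjI ballI)
    show "i \<in> mor X" using ih hom_D by blast
    fix A0 dl assume A0: "A0 \<in> ob X" and dl: "dl \<in> Ex X (cd X i) A0"
    have dlC: "dl \<in> Ex X C A0" using dl di by simp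
    have "pull X A0 p dl = ezero X (cd X k) A0" using pz A0 dlC dp by simp
    from defl_exact[OF rg dlC A0 this] obtain f where f: "f \<in> hom X K A0" "dl = push X C f g" by blast
    let ?t = "pull X K i g"
    have tE: "?t \<in> Ex X (cd X x') K" using pull_Ex oK ih by blast
    have "push X (cd X x') e ?t = pull X (cd X e) i (push X C e g)" using push_pull[OF eh ih oK(2)] .
    also have "\<dots> = ezero X (cd X x') (cd X e)" using defl_zero[OF r'] .
    finally obtain h where h: "h \<in> hom X (cd X x') Y" "?t = pull X K h eps"
      using infl_exact[OF re tE Zo] by blast
    have "?t \<in> F (cd X x') K" using sf h oK epsF unfolding is_additive_subfunctor_def by metis
    then have "push X (cd X x') f ?t \<in> F (cd X x') A0"
      using sf f Zo unfolding is_additive_subfunctor_def by blast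
    moreover have "pull X A0 i dl = push X (cd X x') f ?t" using push_pull[OF f(1) ih oK(2)] f(2) by simp
    ultimately show "pull X A0 i dl \<in> F (dm X i) A0" using di by simp
  qed
  show "\<exists>i. special_precover X (Ph X F) C i" unfolding special_precover_def
    using iP di rg r' tm eR by blast
qed

end

theorem theorem4p5:
  fixes X :: "('o,'m,'e) extri" and I :: "'m set"
  assumes "extriangulated X" and "is_ideal X I"
  shows
    "(enough_proj_morphisms X \<longrightarrow>
        ((\<exists>F. is_additive_subfunctor X F \<and> enough_inj_morphisms X F \<and> I = Ph X F)
            \<longrightarrow> special_precovering X I)
      \<and> ((\<exists>F. is_additive_subfunctor X F \<and> enough_special_inj_morphisms X F \<and> I = Ph X F)
            \<longrightarrow> special_precovering X I))
   \<and> (enough_inj_objects X \<longrightarrow>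
        special_precovering X I \<longrightarrow> complete_cotorsion_pair X I (rperp X I))
   \<and> (complete_cotorsion_pair X I (rperp X I) \<longrightarrow>
        enough_special_inj_morphisms X (Istar X I) \<and> I = Ph X (Istar X I))
   \<and> ((enough_special_inj_morphisms X (Istar X I) \<and> I = Ph X (Istar X I)) \<longrightarrow>
        (\<exists>F. is_additive_subfunctor X F \<and> enough_special_inj_morphisms X F \<and> I = Ph X F))"
proof -
  interpret extri_cat X using assms(1) by unfold_locales
  have si: "\<And>F. enough_special_inj_morphisms X F \<Longrightarrow> enough_inj_morphisms X F"
    unfolding enough_special_inj_morphisms_def enough_inj_morphisms_def by blast
  show ?thesis
  proof (intro conjI impI)
    assume ep: "enough_proj_morphisms X"
    { assume "\<exists>F. is_additive_subfunctor X F \<and> enough_inj_morphisms X F \<and> I = Ph X F"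
      then show "special_precovering X I" using partI[OF ep] by blast }
    { assume "\<exists>F. is_additive_subfunctor X F \<and> enough_special_inj_morphisms X F \<and> I = Ph X F"
      then show "special_precovering X I" using partI[OF ep] si by blast }
  next
    assume "enough_inj_objects X" "special_precovering X I"
    then show "complete_cotorsion_pair X I (rperp X I)" using partII assms(2) by blast
  next
    assume "complete_cotorsion_pair X I (rperp X I)"
    then show "enough_special_inj_morphisms X (Istar X I)" "I = Ph X (Istar X I)"
      using partIII assms(2) by blast+
  next
    assume "enough_special_inj_morphisms X (Istar X I) \<and> I = Ph X (Istar X I)"
    then show "\<exists>F. is_additive_subfunctor X F \<and> enough_special_inj_morphisms X F \<and> I = Ph X F"
      using partIV assms(2) by blast
  qed
qed


end
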